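(* Let $n=5$ and let $\mathcal{K}=\{1,2,3\}$. For every channel matrix $\boldsymbol{D}=(d_{ji})_{j,i\in\mathcal{K}}$ whose entries are monomials $d_{ji}=x^{k_{ji}}$ ($k_{ji}\in\mathbb{N}$), there is no choice of transmission offsets $p_{ji}\in\{0,1,\dots,4\}$, $i,j\in\mathcal{K}$ (one message $W_{ji}$ per transmitter–receiver pair, i.e. $m_{ji}=1$), such that all separability conditions (S1), (S2), (S3) hold simultaneously. In other words, perfect Cyclic Interference Alignment achieving $\frac{9}{5}$ degrees of freedom with $n=5$ dimensions is infeasible on the $3$-user $X$-network.
   Context: Cyclic polynomial channel model of the $3$-user $X$-network. Fix $n\in\mathbb{N}$; all congruences are taken in the polynomial ring modulo $x^n-1$, so $x^a\equiv x^b \pmod{x^n-1}$ iff $a\equiv b \pmod n$. Let $\mathcal{K}=\{1,2,3\}$. Transmitter $\mathrm{Tx}_i$ holds one message $W_{ji}$ for each receiver $\mathrm{Rx}_j$ ($9$ messages in total), each message being an element of an abelian group (binary strings of length $t$). $\mathrm{Tx}_i$ chooses offsets $p_{ji}\in\{0,\dots,n-1\}$ and transmits $u_i(x)\equiv\sum_{j\in\mathcal{K}}W_{ji}x^{p_{ji}}$. The channel matrix is $\boldsymbol{D}=(d_{ji})$ with each $d_{ji}$ a monomial $x^{k}$, $k\in\mathbb{N}$ (a cyclic shift), known to all users. Receiver $\mathrm{Rx}_j$ observes $r_j(x)\equiv\sum_{i\in\mathcal{K}}d_{ji}u_i(x)$, whose coefficient at $x^m$ is the sum of all messages arriving at offset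 $m$. At $\mathrm{Rx}_a$ the dedicated signals are $d_{al}x^{p_{al}}$ ($l\in\mathcal{K}$) and the interfering signals are $d_{al}x^{p_{bl}}$ with $l\in\mathcal{K}$, $b\ne a$. Separability conditions: (S1) intra-user: for each $i$, $x^{p_{1i}},x^{p_{2i}},x^{p_{3i}}$ are pairwise incongruent; (S2) multiple-access: for each $a$, the three dedicated signals $d_{a1}x^{p_{a1}},d_{a2}x^{p_{a2}},d_{a3}x^{p_{a3}}$ are pairwise incongruent; (S3) inter-user: for each $a$, every dedicated signal at $\mathrm{Rx}_a$ is incongruent to every interfering signal at $\mathrm{Rx}_a$. A message is received interference-free if it occupies an offset at its intended receiver containing no other message; the degrees of freedom are $M/n$ with $M$ the number of dedicated messages received interference-free. *)

theory Defs
  imports "HOL-Number_Theory.Cong"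
begin

text \<open>Cyclic polynomial model: a monomial x^a is represented by its exponent a,
  and x^a \<equiv> x^b (mod x^n - 1) iff a \<equiv> b (mod n).
  A channel matrix D = (d_ji) with d_ji = x^(k j i) is represented by k.
  Multiplying d_al = x^(k a l) by x^(p b l) gives exponent k a l + p b l.\<close>

definition users :: "nat set" where
  "users = {1, 2, 3}"

definition mono_cong :: "nat \<Rightarrow> nat \<Rightarrow> nat \<Rightarrow> bool" where
  "mono_cong n a b \<longleftrightarrow> [a = b] (mod n)"

definition sep_intra :: "nat \<Rightarrow> (nat \<Rightarrow> nat \<Rightarrow> nat) \<Rightarrow> bool" where
  "sep_intra n p \<longleftrightarrow>
     (\<forall>i\<in>users. \<forall>j\<in>users. \<forall>j'\<in>users. j \<noteq> j' \<longrightarrow> \<not> mono_cong n (p j i) (p j' i))"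

definition sep_mac :: "nat \<Rightarrow> (nat \<Rightarrow> nat \<Rightarrow> nat) \<Rightarrow> (nat \<Rightarrow> nat \<Rightarrow> nat) \<Rightarrow> bool" where
  "sep_mac n k p \<longleftrightarrow>
     (\<forall>a\<in>users. \<forall>l\<in>users. \<forall>l'\<in>users. l \<noteq> l' \<longrightarrow>
        \<not> mono_cong n (k a l + p a l) (k a l' + p a l'))"

definition sep_inter :: "nat \<Rightarrow> (nat \<Rightarrow> nat \<Rightarrow> nat) \<Rightarrow> (nat \<Rightarrow> nat \<Rightarrow> nat) \<Rightarrow> bool" where
  "sep_inter n k p \<longleftrightarrow>
     (\<forall>a\<in>users. \<forall>l\<in>users. \<forall>l'\<in>users. \<forall>b\<in>users. b \<noteq> a \<longrightarrow>
        \<not> mono_cong n (k a l + p a l) (k a l' + p b l'))"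

end

theory Submission
  imports Defs
begin

lemma two5': "(5::int) dvd 2*(a-b) \<Longrightarrow> 5 dvd (b-a)" by presburger
lemma two5: "(5::int) dvd 2*t \<Longrightarrow> 5 dvd t" by presburger
lemma comb3: "(5::int) dvd a \<Longrightarrow> 5 dvd b \<Longrightarrow> 5 dvd c \<Longrightarrow> X = a + b - c \<Longrightarrow> 5 dvd X"
  by simp
lemma comb2: "(5::int) dvd a \<Longrightarrow> 5 dvd b \<Longrightarrow> X = a - b \<Longrightarrow> 5 dvd X"
  by simp
lemma comb4: "(5::int) dvd a \<Longrightarrow> 5 dvd b \<Longrightarrow> 5 dvd c \<Longrightarrow> 5 dvd d \<Longrightarrow> X = a - b - c - d \<Longrightarrow> 5 dvd X"
  by simp
lemma core:
  fixes x y z x' y' z' K K' L L' M M' :: int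
  assumes r1: "(5 dvd ((K+y)-(K'+y')) \<and> 5 dvd ((K+z)-(K'+z'))) \<or> (5 dvd ((K+y)-(K'+z')) \<and> 5 dvd ((K+z)-(K'+y')))"
  and d1: "\<not> 5 dvd ((K+x)-(K'+x'))"
  and r2: "(5 dvd ((L+x)-(L'+x')) \<and> 5 dvd ((L+z)-(L'+z'))) \<or> (5 dvd ((L+x)-(L'+z')) \<and> 5 dvd ((L+z)-(L'+x')))"
  and r3: "(5 dvd ((M+x)-(M'+x')) \<and> 5 dvd ((M+y)-(M'+y'))) \<or> (5 dvd ((M+x)-(M'+y')) \<and> 5 dvd ((M+y)-(M'+x')))"
  and dist: "\<not> 5 dvd (x'-y')" "\<not> 5 dvd (y'-z')"
  shows "5 dvd (y + y' - z - z')"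
proof (rule disjE[OF r1])
  assume h: "5 dvd ((K+y)-(K'+z')) \<and> 5 dvd ((K+z)-(K'+y'))"
  show ?thesis by (rule comb2[OF conjunct1[OF h] conjunct2[OF h]]) (simp add: algebra_simps)
next
  assume h: "5 dvd ((K+y)-(K'+y')) \<and> 5 dvd ((K+z)-(K'+z'))"
  have A: "5 dvd ((y-z) - (y'-z'))" by (rule comb2[OF conjunct1[OF h] conjunct2[OF h]]) (simp add: algebra_simps)
  show ?thesis
  proof (rule disjE[OF r3])
    assume g: "5 dvd ((M+x)-(M'+x')) \<and> 5 dvd ((M+y)-(M'+y'))"
    have "5 dvd ((K+x)-(K'+x'))" by (rule comb3[OF conjunct1[OF h] conjunct1[OF g] conjunct2[OF g]]) (simp add: algebra_simps)
    with d1 show ?thesis by (rule notE)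
  next
    assume g: "5 dvd ((M+x)-(M'+y')) \<and> 5 dvd ((M+y)-(M'+x'))"
    have B: "5 dvd ((x-y) - (y'-x'))" by (rule comb2[OF conjunct1[OF g] conjunct2[OF g]]) (simp add: algebra_simps)
    show ?thesis
    proof (rule disjE[OF r2])
      assume f: "5 dvd ((L+x)-(L'+x')) \<and> 5 dvd ((L+z)-(L'+z'))"
      have "5 dvd (2*(y'-x'))" by (rule comb4[OF conjunct1[OF f] conjunct2[OF f] A B]) (simp add: algebra_simps)
      then have "5 dvd (x'-y')" by (rule two5')
      with dist(1) show ?thesis by (rule notE)
    next
      assume f: "5 dvd ((L+x)-(L'+z')) \<and> 5 dvd ((L+z)-(L'+x'))"
      have "5 dvd (2*(y'-z'))" by (rule comb4[OF conjunct1[OF f] conjunct2[OF f] A B]) (simp add: algebra_simps)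
      then have "5 dvd (y'-z')" by (rule two5)
      with dist(2) show ?thesis by (rule notE)
    qed
  qed
qed
lemma setstep:
  fixes d1 d2 d3 x y x' y' :: nat
  assumes "d1 mod 5 \<noteq> d2 mod 5" "d1 mod 5 \<noteq> d3 mod 5" "d2 mod 5 \<noteq> d3 mod 5"
    "x mod 5 \<noteq> y mod 5" "x' mod 5 \<noteq> y' mod 5"
    "x mod 5 \<notin> {d1 mod 5, d2 mod 5, d3 mod 5}" "y mod 5 \<notin> {d1 mod 5, d2 mod 5, d3 mod 5}"
    "x' mod 5 \<notin> {d1 mod 5, d2 mod 5, d3 mod 5}" "y' mod 5 \<notin> {d1 mod 5, d2 mod 5, d3 mod 5}"
  shows "(x mod 5 = x' mod 5 \<and> y mod 5 = y' mod 5) \<or> (x mod 5 = y' mod 5 \<and> y mod 5 = x' mod 5)"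
proof -
  define R where "R = {0..<5} - {d1 mod 5, d2 mod 5, d3 mod 5}"
  have "card {d1 mod 5, d2 mod 5, d3 mod 5} = 3" using assms(1-3) by auto
  moreover have "{d1 mod 5, d2 mod 5, d3 mod 5} \<subseteq> {0..<5}" by auto
  ultimately have cR: "card R = 2" unfolding R_def by (simp add: card_Diff_subset)
  have fR: "finite R" unfolding R_def by auto
  have s1: "{x mod 5, y mod 5} \<subseteq> R" "{x' mod 5, y' mod 5} \<subseteq> R" using assms(6-9) unfolding R_def by auto
  have c1: "card {x mod 5, y mod 5} = 2" "card {x' mod 5, y' mod 5} = 2" using assms(4,5) by auto
  have "{x mod 5, y mod 5} = R" using card_subset_eq[OF fR s1(1)] c1 cR by simp
  moreover have "{x' mod 5, y' mod 5} = R" using card_subset_eq[OF fR s1(2)] c1 cR by simp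
  ultimately have "{x mod 5, y mod 5} = {x' mod 5, y' mod 5}" by simp
  then show ?thesis unfolding doubleton_eq_iff .
qed

lemma nat_dvd: "((a::nat) mod 5 = b mod 5) = ((5::int) dvd (int a - int b))"
proof -
  have "((a::nat) mod 5 = b mod 5) = (int a mod 5 = int b mod 5)"
    by (metis of_nat_eq_iff of_nat_numeral zmod_int)
  also have "\<dots> = ((5::int) dvd (int a - int b))" by (rule mod_eq_dvd_iff)
  finally show ?thesis .
qed

lemma addc: "((c::nat) + a) mod 5 = (c + b) mod 5 \<Longrightarrow> a mod 5 = b mod 5"
  unfolding nat_dvd by simp

lemma pairlem:
  fixes k p :: "nat \<Rightarrow> nat \<Rightarrow> nat"
  assumes I: "sep_intra 5 p" and S: "sep_mac 5 k p" and T: "sep_inter 5 k p"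
    and l: "l \<in> users" and l': "l' \<in> users" and ll: "l \<noteq> l'"
  shows "(5::int) dvd (int (p 2 l) + int (p 2 l') - int (p 3 l) - int (p 3 l'))"
proof -
  note defs = sep_intra_def sep_mac_def sep_inter_def mono_cong_def cong_def users_def
  have I': "\<And>i j j'. i \<in> {1,2,3} \<Longrightarrow> j \<in> {1,2,3} \<Longrightarrow> j' \<in> {1,2,3} \<Longrightarrow> j \<noteq> j' \<Longrightarrow> p j i mod 5 \<noteq> p j' i mod 5"
    using I unfolding defs by blast
  have S': "\<And>a i i'. a \<in> {1,2,3} \<Longrightarrow> i \<in> {1,2,3} \<Longrightarrow> i' \<in> {1,2,3} \<Longrightarrow> i \<noteq> i' \<Longrightarrow> (k a i + p a i) mod 5 \<noteq> (k a i' + p a i') mod 5"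
    using S unfolding defs by blast
  have T': "\<And>a i i' b. a \<in> {1,2,3} \<Longrightarrow> i \<in> {1,2,3} \<Longrightarrow> i' \<in> {1,2,3} \<Longrightarrow> b \<in> {1,2,3} \<Longrightarrow> b \<noteq> a \<Longrightarrow> (k a i + p a i) mod 5 \<noteq> (k a i' + p b i') mod 5"
    using T unfolding defs by blast
  have lu: "l \<in> {1,2,3}" "l' \<in> {1,2,3}" using l l' by (auto simp: users_def)
  have step: "\<And>a b c. a \<in> {1,2,3} \<Longrightarrow> b \<in> {1,2,3} \<Longrightarrow> c \<in> {1,2,3} \<Longrightarrow> b \<noteq> a \<Longrightarrow> c \<noteq> a \<Longrightarrow> b \<noteq> c \<Longrightarrow>
     (5 dvd (int (k a l + p b l) - int (k a l' + p b l')) \<and> (5::int) dvd (int (k a l + p c l) - int (k a l' + p c l'))) \<or>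
     (5 dvd (int (k a l + p b l) - int (k a l' + p c l')) \<and> (5::int) dvd (int (k a l + p c l) - int (k a l' + p b l')))"
  proof -
    fix a b c :: nat
    assume h: "a \<in> {1,2,3}" "b \<in> {1,2,3}" "c \<in> {1,2,3}" "b \<noteq> a" "c \<noteq> a" "b \<noteq> c"
    have "((k a l + p b l) mod 5 = (k a l' + p b l') mod 5 \<and> (k a l + p c l) mod 5 = (k a l' + p c l') mod 5) \<or>
          ((k a l + p b l) mod 5 = (k a l' + p c l') mod 5 \<and> (k a l + p c l) mod 5 = (k a l' + p b l') mod 5)"
    proof (rule setstep[of "k a 1 + p a 1" "k a 2 + p a 2" "k a 3 + p a 3" "k a l + p b l" "k a l + p c l" "k a l' + p b l'" "k a l' + p c l'"])
      show "(k a 1 + p a 1) mod 5 \<noteq> (k a 2 + p a 2) mod 5" using S'[of a 1 2] h by simp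
      show "(k a 1 + p a 1) mod 5 \<noteq> (k a 3 + p a 3) mod 5" using S'[of a 1 3] h by simp
      show "(k a 2 + p a 2) mod 5 \<noteq> (k a 3 + p a 3) mod 5" using S'[of a 2 3] h by simp
      show "(k a l + p b l) mod 5 \<noteq> (k a l + p c l) mod 5" using I'[of l b c] h lu addc by blast
      show "(k a l' + p b l') mod 5 \<noteq> (k a l' + p c l') mod 5" using I'[of l' b c] h lu addc by blast
      show "(k a l + p b l) mod 5 \<notin> {(k a 1 + p a 1) mod 5, (k a 2 + p a 2) mod 5, (k a 3 + p a 3) mod 5}"
        using T'[of a 1 l b] T'[of a 2 l b] T'[of a 3 l b] h lu by auto
      show "(k a l + p c l) mod 5 \<notin> {(k a 1 + p a 1) mod 5, (k a 2 + p a 2) mod 5, (k a 3 + p a 3) mod 5}"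
        using T'[of a 1 l c] T'[of a 2 l c] T'[of a 3 l c] h lu by auto
      show "(k a l' + p b l') mod 5 \<notin> {(k a 1 + p a 1) mod 5, (k a 2 + p a 2) mod 5, (k a 3 + p a 3) mod 5}"
        using T'[of a 1 l' b] T'[of a 2 l' b] T'[of a 3 l' b] h lu by auto
      show "(k a l' + p c l') mod 5 \<notin> {(k a 1 + p a 1) mod 5, (k a 2 + p a 2) mod 5, (k a 3 + p a 3) mod 5}"
        using T'[of a 1 l' c] T'[of a 2 l' c] T'[of a 3 l' c] h lu by auto
    qed
    then show "(5 dvd (int (k a l + p b l) - int (k a l' + p b l')) \<and> (5::int) dvd (int (k a l + p c l) - int (k a l' + p c l'))) \<or>
     (5 dvd (int (k a l + p b l) - int (k a l' + p c l')) \<and> (5::int) dvd (int (k a l + p c l) - int (k a l' + p b l')))"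
      unfolding nat_dvd .
  qed

  have r1: "(5 dvd ((int (k 1 l) + int (p 2 l)) - (int (k 1 l') + int (p 2 l'))) \<and> (5::int) dvd ((int (k 1 l) + int (p 3 l)) - (int (k 1 l') + int (p 3 l')))) \<or>
     (5 dvd ((int (k 1 l) + int (p 2 l)) - (int (k 1 l') + int (p 3 l'))) \<and> (5::int) dvd ((int (k 1 l) + int (p 3 l)) - (int (k 1 l') + int (p 2 l'))))"
    by (rule step[of 1 2 3, unfolded of_nat_add]) auto
  have r2: "(5 dvd ((int (k 2 l) + int (p 1 l)) - (int (k 2 l') + int (p 1 l'))) \<and> (5::int) dvd ((int (k 2 l) + int (p 3 l)) - (int (k 2 l') + int (p 3 l')))) \<or>
     (5 dvd ((int (k 2 l) + int (p 1 l)) - (int (k 2 l') + int (p 3 l'))) \<and> (5::int) dvd ((int (k 2 l) + int (p 3 l)) - (int (k 2 l') + int (p 1 l'))))"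
    by (rule step[of 2 1 3, unfolded of_nat_add]) auto
  have r3: "(5 dvd ((int (k 3 l) + int (p 1 l)) - (int (k 3 l') + int (p 1 l'))) \<and> (5::int) dvd ((int (k 3 l) + int (p 2 l)) - (int (k 3 l') + int (p 2 l')))) \<or>
     (5 dvd ((int (k 3 l) + int (p 1 l)) - (int (k 3 l') + int (p 2 l'))) \<and> (5::int) dvd ((int (k 3 l) + int (p 2 l)) - (int (k 3 l') + int (p 1 l'))))"
    by (rule step[of 3 1 2, unfolded of_nat_add]) auto
  have d1: "\<not> (5::int) dvd ((int (k 1 l) + int (p 1 l)) - (int (k 1 l') + int (p 1 l')))"
  proof -
    have "(k 1 l + p 1 l) mod 5 \<noteq> (k 1 l' + p 1 l') mod 5" by (rule S') (use lu ll in auto)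
    then show ?thesis unfolding nat_dvd of_nat_add .
  qed
  have ds: "\<not> (5::int) dvd (int (p 1 l') - int (p 2 l'))" "\<not> (5::int) dvd (int (p 2 l') - int (p 3 l'))"
  proof -
    have "p 1 l' mod 5 \<noteq> p 2 l' mod 5" by (rule I') (use lu in auto)
    moreover have "p 2 l' mod 5 \<noteq> p 3 l' mod 5" by (rule I') (use lu in auto)
    ultimately show "\<not> (5::int) dvd (int (p 1 l') - int (p 2 l'))" "\<not> (5::int) dvd (int (p 2 l') - int (p 3 l'))" unfolding nat_dvd .
  qed
  show ?thesis
    by (rule core[where x="int (p 1 l)" and y="int (p 2 l)" and z="int (p 3 l)" and x'="int (p 1 l')" and y'="int (p 2 l')" and z'="int (p 3 l')"
       and K="int (k 1 l)" and K'="int (k 1 l')" and L="int (k 2 l)" and L'="int (k 2 l')" and M="int (k 3 l)" and M'="int (k 3 l')", OF r1 d1 r2 r3 ds])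
qed

theorem theorem1:
  fixes k :: "nat \<Rightarrow> nat \<Rightarrow> nat"
  shows "\<not> (\<exists>p :: nat \<Rightarrow> nat \<Rightarrow> nat.
            (\<forall>j\<in>users. \<forall>i\<in>users. p j i < 5) \<and>
            sep_intra 5 p \<and> sep_mac 5 k p \<and> sep_inter 5 k p)"
proof
  assume "\<exists>p :: nat \<Rightarrow> nat \<Rightarrow> nat.
            (\<forall>j\<in>users. \<forall>i\<in>users. p j i < 5) \<and>
            sep_intra 5 p \<and> sep_mac 5 k p \<and> sep_inter 5 k p"
  then obtain p where I: "sep_intra 5 p" and S: "sep_mac 5 k p" and T: "sep_inter 5 k p" by blast
  have u: "1 \<in> users" "2 \<in> users" "3 \<in> users" by (auto simp: users_def)
  have a: "(5::int) dvd (int (p 2 1) + int (p 2 2) - int (p 3 1) - int (p 3 2))" by (rule pairlem[OF I S T u(1) u(2)]) simp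
  have b: "(5::int) dvd (int (p 2 1) + int (p 2 3) - int (p 3 1) - int (p 3 3))" by (rule pairlem[OF I S T u(1) u(3)]) simp
  have c: "(5::int) dvd (int (p 2 2) + int (p 2 3) - int (p 3 2) - int (p 3 3))" by (rule pairlem[OF I S T u(2) u(3)]) simp
  have "\<not> mono_cong 5 (p 2 3) (p 3 3)" by (rule I[unfolded sep_intra_def, rule_format, OF u(3) u(2) u(3)]) simp
  then have "p 2 3 mod 5 \<noteq> p 3 3 mod 5" unfolding mono_cong_def cong_def .
  then have d: "\<not> (5::int) dvd (int (p 2 3) - int (p 3 3))" unfolding nat_dvd .
  have "(5::int) dvd (2 * (int (p 2 3) - int (p 3 3)))"
    by (rule comb3[OF b c a]) (simp add: algebra_simps)
  then have "(5::int) dvd (int (p 2 3) - int (p 3 3))" by (rule two5)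
  with d show False by (rule notE)
qed

end
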